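(* Let $T=(L,R,\tau)$ be a rewrite rule without cloning (i.e. $L,R$ are termgraphs and $\tau:|L|\to|R|$ is a total function) and let $m:L\to G$ be a graph morphism such that $|m|$ is injective. Then there exists a heterogeneous pushout of $T$ and $m$, i.e. an initial object in the category of heterogeneous cones over $T$ and $m$. Moreover, if $(\mathcal{H},\tau_1,\delta)$ is a pushout of $\tau$ and $|m|$ in the category of sets (so $\delta\circ\tau=\tau_1\circ|m|$ with $\tau_1:|G|\to\mathcal{H}$, $\delta:|R|\to\mathcal{H}$), then there is a unique graph $H$ with set of nodes $\mathcal{H}$ such that $\tau_1$ is strictly graphic on $|G|-|m(L)|$ and $\delta$ is strictly graphic on $|R|$; $\delta$ underlies a graph morphism $d:R\to H$, and $(H,\tau_1,d)$ is a heterogeneous pushout of $T$ and $m$.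
   Context: A signature $\Omega$ assigns an arity $\mathrm{ar}(\omega)\in\mathbb{N}$ to each symbol. For a function $f$, $f^*$ acts letterwise on strings. A termgraph (graph) $G=(\mathcal{N}_G,\mathcal{D}_G,\mathcal{L}_G,\mathcal{S}_G)$ has node set $|G|=\mathcal{N}_G$, labeled nodes $\mathcal{D}_G\subseteq\mathcal{N}_G$, labeling $\mathcal{L}_G:\mathcal{D}_G\to\Omega$ and successors $\mathcal{S}_G:\mathcal{D}_G\to\mathcal{N}_G^*$ with $|\mathcal{S}_G(n)|=\mathrm{ar}(\mathcal{L}_G(n))$. A graph morphism $g:G\to H$ is a function $g:|G|\to|H|$ with $g(\mathcal{D}_G)\subseteq\mathcal{D}_H$ and, for each labeled $n$, $\mathcal{L}_H(g(n))=\mathcal{L}_G(n)$ and $\mathcal{S}_H(g(n))=g^*(\mathcal{S}_G(n))$ (unlabeled nodes may map anywhere). A function $\gamma:|G|\to|H|$ is graphic at $n$ if $n$ is unlabeled or both $n,\gamma(n)$ are labeled with $\mathcal{L}_H(\gamma(n))=\mathcal{L}_G(n)$, $\mathcal{S}_H(\gamma(n))=\gamma^*(\mathcal{S}_G(n))$; strictly graphic at $n$ if both $n,\gamma(n)$ are unlabeled or both are labeled with these two equalities; (strictly) graphic on a set if so at each of its nodes. A rewrite rule without cloning is $T=(L,R,\tau)$ with $\tau:|L|\to|R|$ a function; a morphism of such rules $(L,R,\tau)\to(L_1,R_1,\tau_1)$ is a pair of graph morphisms $m:L\to L_1$, $d:R\to R_1$ with $|d|\circ\tau=\tau_1\circ|m|$.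 A heterogeneous cone over $T$ and $m:L\to G$ is a triple $(H,\tau_1,d)$ with $H$ a graph, $\tau_1:|G|\to|H|$ a function, $d:R\to H$ a graph morphism, such that $|d|\circ\tau=\tau_1\circ|m|$ and $\tau_1$ is graphic on $|G|-|m(L)|$. A morphism of heterogeneous cones $(H,\tau_1,d)\to(H',\tau_1',d')$ is a graph morphism $h:H\to H'$ with $|h|\circ\tau_1=\tau_1'$ and $h\circ d=d'$. *)

theory Defs
  imports Main
begin

text \<open>Termgraphs over a signature given by an arity function ar :: 'l => nat.
  Node type 'n; nodes, labeled nodes, labeling and successor functions
  (the latter two are only meaningful on labeled nodes).\<close>

record ('n, 'l) tgraph =
  nodes :: "'n set"
  labeled :: "'n set"
  lab :: "'n \<Rightarrow> 'l"
  succ :: "'n \<Rightarrow> 'n list"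

definition wf_graph :: "('l \<Rightarrow> nat) \<Rightarrow> ('n, 'l) tgraph \<Rightarrow> bool" where
  "wf_graph ar G \<longleftrightarrow> labeled G \<subseteq> nodes G \<and>
     (\<forall>n\<in>labeled G. set (succ G n) \<subseteq> nodes G \<and> length (succ G n) = ar (lab G n))"

definition same_graph :: "('n, 'l) tgraph \<Rightarrow> ('n, 'l) tgraph \<Rightarrow> bool" where
  "same_graph G H \<longleftrightarrow> nodes G = nodes H \<and> labeled G = labeled H \<and>
     (\<forall>n\<in>labeled G. lab G n = lab H n \<and> succ G n = succ H n)"

definition graph_morphism :: "('a, 'l) tgraph \<Rightarrow> ('b, 'l) tgraph \<Rightarrow> ('a \<Rightarrow> 'b) \<Rightarrow> bool" where
  "graph_morphism G H g \<longleftrightarrow> g ` nodes G \<subseteq> nodes H \<and> g ` labeled G \<subseteq> labeled H \<and>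
     (\<forall>n\<in>labeled G. lab H (g n) = lab G n \<and> succ H (g n) = map g (succ G n))"

definition graphic_at :: "('a, 'l) tgraph \<Rightarrow> ('b, 'l) tgraph \<Rightarrow> ('a \<Rightarrow> 'b) \<Rightarrow> 'a \<Rightarrow> bool" where
  "graphic_at G H \<gamma> n \<longleftrightarrow> n \<notin> labeled G \<or>
     (n \<in> labeled G \<and> \<gamma> n \<in> labeled H \<and> lab H (\<gamma> n) = lab G n \<and> succ H (\<gamma> n) = map \<gamma> (succ G n))"

definition strictly_graphic_at :: "('a, 'l) tgraph \<Rightarrow> ('b, 'l) tgraph \<Rightarrow> ('a \<Rightarrow> 'b) \<Rightarrow> 'a \<Rightarrow> bool" where
  "strictly_graphic_at G H \<gamma> n \<longleftrightarrow> (n \<notin> labeled G \<and> \<gamma> n \<notin> labeled H) \<or>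
     (n \<in> labeled G \<and> \<gamma> n \<in> labeled H \<and> lab H (\<gamma> n) = lab G n \<and> succ H (\<gamma> n) = map \<gamma> (succ G n))"

definition graphic_on :: "('a, 'l) tgraph \<Rightarrow> ('b, 'l) tgraph \<Rightarrow> ('a \<Rightarrow> 'b) \<Rightarrow> 'a set \<Rightarrow> bool" where
  "graphic_on G H \<gamma> S \<longleftrightarrow> (\<forall>n\<in>S. graphic_at G H \<gamma> n)"

definition strictly_graphic_on :: "('a, 'l) tgraph \<Rightarrow> ('b, 'l) tgraph \<Rightarrow> ('a \<Rightarrow> 'b) \<Rightarrow> 'a set \<Rightarrow> bool" where
  "strictly_graphic_on G H \<gamma> S \<longleftrightarrow> (\<forall>n\<in>S. strictly_graphic_at G H \<gamma> n)"

definition het_cone ::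
  "('l \<Rightarrow> nat) \<Rightarrow> ('a, 'l) tgraph \<Rightarrow> ('b, 'l) tgraph \<Rightarrow> ('a \<Rightarrow> 'b) \<Rightarrow>
   ('g, 'l) tgraph \<Rightarrow> ('a \<Rightarrow> 'g) \<Rightarrow> ('h, 'l) tgraph \<Rightarrow> ('g \<Rightarrow> 'h) \<Rightarrow> ('b \<Rightarrow> 'h) \<Rightarrow> bool" where
  "het_cone ar L R \<tau> G m H \<tau>1 d \<longleftrightarrow> wf_graph ar H \<and> \<tau>1 ` nodes G \<subseteq> nodes H \<and>
     graph_morphism R H d \<and> (\<forall>n\<in>nodes L. d (\<tau> n) = \<tau>1 (m n)) \<and>
     graphic_on G H \<tau>1 (nodes G - m ` nodes L)"

definition het_cone_morphism ::
  "('g, 'l) tgraph \<Rightarrow> ('b, 'l) tgraph \<Rightarrow> ('h, 'l) tgraph \<Rightarrow> ('g \<Rightarrow> 'h) \<Rightarrow> ('b \<Rightarrow> 'h) \<Rightarrow>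
   ('k, 'l) tgraph \<Rightarrow> ('g \<Rightarrow> 'k) \<Rightarrow> ('b \<Rightarrow> 'k) \<Rightarrow> ('h \<Rightarrow> 'k) \<Rightarrow> bool" where
  "het_cone_morphism G R H \<tau>1 d H' \<tau>1' d' h \<longleftrightarrow> graph_morphism H H' h \<and>
     (\<forall>x\<in>nodes G. h (\<tau>1 x) = \<tau>1' x) \<and> (\<forall>x\<in>nodes R. h (d x) = d' x)"

text \<open>Initiality is tested
  against all cones whose node type is 'k (given by the itself argument);
  morphisms are identified when they agree on the nodes of H.\<close>
definition het_pushout ::
  "'k itself \<Rightarrow> ('l \<Rightarrow> nat) \<Rightarrow> ('a, 'l) tgraph \<Rightarrow> ('b, 'l) tgraph \<Rightarrow> ('a \<Rightarrow> 'b) \<Rightarrow>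
   ('g, 'l) tgraph \<Rightarrow> ('a \<Rightarrow> 'g) \<Rightarrow> ('h, 'l) tgraph \<Rightarrow> ('g \<Rightarrow> 'h) \<Rightarrow> ('b \<Rightarrow> 'h) \<Rightarrow> bool" where
  "het_pushout _ ar L R \<tau> G m H \<tau>1 d \<longleftrightarrow> het_cone ar L R \<tau> G m H \<tau>1 d \<and>
     (\<forall>(H' :: ('k, 'l) tgraph) \<tau>1' d'. het_cone ar L R \<tau> G m H' \<tau>1' d' \<longrightarrow>
        (\<exists>h. het_cone_morphism G R H \<tau>1 d H' \<tau>1' d' h \<and>
           (\<forall>h'. het_cone_morphism G R H \<tau>1 d H' \<tau>1' d' h' \<longrightarrow> (\<forall>x\<in>nodes H. h' x = h x))))"

text \<open>The universal property is tested against
  all sets X of elements of type 'x (given by the itself argument).\<close>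
definition set_pushout ::
  "'x itself \<Rightarrow> 'a set \<Rightarrow> 'b set \<Rightarrow> 'g set \<Rightarrow> ('a \<Rightarrow> 'b) \<Rightarrow> ('a \<Rightarrow> 'g) \<Rightarrow>
   'h set \<Rightarrow> ('g \<Rightarrow> 'h) \<Rightarrow> ('b \<Rightarrow> 'h) \<Rightarrow> bool" where
  "set_pushout _ NL NR NG \<tau> m HH \<tau>1 \<delta> \<longleftrightarrow>
     \<tau>1 ` NG \<subseteq> HH \<and> \<delta> ` NR \<subseteq> HH \<and> (\<forall>x\<in>NL. \<delta> (\<tau> x) = \<tau>1 (m x)) \<and>
     (\<forall>(X :: 'x set) f g. f ` NG \<subseteq> X \<and> g ` NR \<subseteq> X \<and> (\<forall>x\<in>NL. g (\<tau> x) = f (m x)) \<longrightarrow>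
        (\<exists>u. u ` HH \<subseteq> X \<and> (\<forall>y\<in>NG. u (\<tau>1 y) = f y) \<and> (\<forall>z\<in>NR. u (\<delta> z) = g z) \<and>
           (\<forall>u'. u' ` HH \<subseteq> X \<and> (\<forall>y\<in>NG. u' (\<tau>1 y) = f y) \<and> (\<forall>z\<in>NR. u' (\<delta> z) = g z)
                \<longrightarrow> (\<forall>w\<in>HH. u' w = u w))))"

definition pushout_graph_cond ::
  "('l \<Rightarrow> nat) \<Rightarrow> ('a, 'l) tgraph \<Rightarrow> ('b, 'l) tgraph \<Rightarrow> ('g, 'l) tgraph \<Rightarrow> ('a \<Rightarrow> 'g) \<Rightarrow>
   'h set \<Rightarrow> ('g \<Rightarrow> 'h) \<Rightarrow> ('b \<Rightarrow> 'h) \<Rightarrow> ('h, 'l) tgraph \<Rightarrow> bool" where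
  "pushout_graph_cond ar L R G m HH \<tau>1 \<delta> H \<longleftrightarrow> wf_graph ar H \<and> nodes H = HH \<and>
     strictly_graphic_on G H \<tau>1 (nodes G - m ` nodes L) \<and>
     strictly_graphic_on R H \<delta> (nodes R)"

end

theory Submission
  imports Defs
begin


lemma cond_char:
  assumes wfR: "wf_graph ar R" and wfG: "wf_graph ar G"
    and P5: "HH = \<tau>1 ` (nodes G - m ` nodes L) \<union> \<delta> ` nodes R"
    and C: "pushout_graph_cond ar L R G m HH \<tau>1 \<delta> H"
  shows "labeled H = \<tau>1 ` (labeled G \<inter> (nodes G - m ` nodes L)) \<union> \<delta> ` labeled R"
    and "\<forall>r\<in>labeled R. \<delta> r \<in> labeled H \<and> lab H (\<delta> r) = lab R r \<and> succ H (\<delta> r) = map \<delta> (succ R r)"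
    and "\<forall>g\<in>labeled G \<inter> (nodes G - m ` nodes L). \<tau>1 g \<in> labeled H \<and> lab H (\<tau>1 g) = lab G g \<and> succ H (\<tau>1 g) = map \<tau>1 (succ G g)"
proof -
  have wfH: "labeled H \<subseteq> HH" and sG: "strictly_graphic_on G H \<tau>1 (nodes G - m ` nodes L)"
    and sR: "strictly_graphic_on R H \<delta> (nodes R)"
    using C unfolding pushout_graph_cond_def wf_graph_def by auto
  have lR: "labeled R \<subseteq> nodes R" and lG: "labeled G \<subseteq> nodes G"
    using wfR wfG unfolding wf_graph_def by auto
  show "\<forall>r\<in>labeled R. \<delta> r \<in> labeled H \<and> lab H (\<delta> r) = lab R r \<and> succ H (\<delta> r) = map \<delta> (succ R r)"
    using sR lR unfolding strictly_graphic_on_def strictly_graphic_at_def by blast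
  show "\<forall>g\<in>labeled G \<inter> (nodes G - m ` nodes L). \<tau>1 g \<in> labeled H \<and> lab H (\<tau>1 g) = lab G g \<and> succ H (\<tau>1 g) = map \<tau>1 (succ G g)"
    using sG unfolding strictly_graphic_on_def strictly_graphic_at_def by blast
  show "labeled H = \<tau>1 ` (labeled G \<inter> (nodes G - m ` nodes L)) \<union> \<delta> ` labeled R"
  proof
    show "labeled H \<subseteq> \<tau>1 ` (labeled G \<inter> (nodes G - m ` nodes L)) \<union> \<delta> ` labeled R"
    proof
      fix w assume w: "w \<in> labeled H"
      with wfH P5 have "w \<in> \<tau>1 ` (nodes G - m ` nodes L) \<union> \<delta> ` nodes R" by auto
      then show "w \<in> \<tau>1 ` (labeled G \<inter> (nodes G - m ` nodes L)) \<union> \<delta> ` labeled R"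
      proof
        assume "w \<in> \<tau>1 ` (nodes G - m ` nodes L)"
        then obtain g where g: "g \<in> nodes G - m ` nodes L" "w = \<tau>1 g" by blast
        with sG w have "g \<in> labeled G" unfolding strictly_graphic_on_def strictly_graphic_at_def by blast
        with g show ?thesis by blast
      next
        assume "w \<in> \<delta> ` nodes R"
        then obtain g where g: "g \<in> nodes R" "w = \<delta> g" by blast
        with sR w have "g \<in> labeled R" unfolding strictly_graphic_on_def strictly_graphic_at_def by blast
        with g show ?thesis by blast
      qed
    qed
    show "\<tau>1 ` (labeled G \<inter> (nodes G - m ` nodes L)) \<union> \<delta> ` labeled R \<subseteq> labeled H"
      using sG sR lR unfolding strictly_graphic_on_def strictly_graphic_at_def by blast
  qed
qed

lemma cond_unique:
  assumes wfR: "wf_graph ar R" and wfG: "wf_graph ar G"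
    and P5: "HH = \<tau>1 ` (nodes G - m ` nodes L) \<union> \<delta> ` nodes R"
    and C: "pushout_graph_cond ar L R G m HH \<tau>1 \<delta> H"
    and C': "pushout_graph_cond ar L R G m HH \<tau>1 \<delta> H'"
  shows "same_graph H H'"
proof -
  note a = cond_char[OF wfR wfG P5 C] and b = cond_char[OF wfR wfG P5 C']
  have "nodes H = nodes H'" using C C' unfolding pushout_graph_cond_def by auto
  moreover have "labeled H = labeled H'" using a(1) b(1) by simp
  moreover have "\<forall>n\<in>labeled H. lab H n = lab H' n \<and> succ H n = succ H' n"
  proof
    fix n assume "n \<in> labeled H"
    then have "n \<in> \<tau>1 ` (labeled G \<inter> (nodes G - m ` nodes L)) \<union> \<delta> ` labeled R" using a(1) by simp
    then show "lab H n = lab H' n \<and> succ H n = succ H' n"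
    proof
      assume "n \<in> \<tau>1 ` (labeled G \<inter> (nodes G - m ` nodes L))"
      then obtain g where "g \<in> labeled G \<inter> (nodes G - m ` nodes L)" "n = \<tau>1 g" by blast
      then show ?thesis using a(3) b(3) by simp
    next
      assume "n \<in> \<delta> ` labeled R"
      then obtain g where "g \<in> labeled R" "n = \<delta> g" by blast
      then show ?thesis using a(2) b(2) by simp
    qed
  qed
  ultimately show ?thesis unfolding same_graph_def by simp
qed

lemma cond_pushout:
  assumes wfR: "wf_graph ar R" and wfG: "wf_graph ar G"
    and tauR: "\<tau> ` nodes L \<subseteq> nodes R"
    and P1: "\<forall>x\<in>nodes L. \<delta> (\<tau> x) = \<tau>1 (m x)"
    and P2: "inj_on \<tau>1 (nodes G - m ` nodes L)"
    and P3: "inj_on \<delta> (nodes R)"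
    and P4: "\<tau>1 ` (nodes G - m ` nodes L) \<inter> \<delta> ` nodes R = {}"
    and P5: "HH = \<tau>1 ` (nodes G - m ` nodes L) \<union> \<delta> ` nodes R"
    and C: "pushout_graph_cond ar L R G m HH \<tau>1 \<delta> H"
  shows "graph_morphism R H \<delta> \<and> het_pushout TYPE('k) ar L R \<tau> G m H \<tau>1 \<delta>"
proof -
  note ch = cond_char[OF wfR wfG P5 C]
  have wfH: "wf_graph ar H" and nH: "nodes H = HH"
    and sG: "strictly_graphic_on G H \<tau>1 (nodes G - m ` nodes L)"
    using C unfolding pushout_graph_cond_def by auto
  have lR: "labeled R \<subseteq> nodes R" and lG: "labeled G \<subseteq> nodes G"
    and sucR: "\<forall>n\<in>labeled R. set (succ R n) \<subseteq> nodes R"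
    and sucG: "\<forall>n\<in>labeled G. set (succ G n) \<subseteq> nodes G"
    using wfR wfG unfolding wf_graph_def by auto
  have gm: "graph_morphism R H \<delta>"
    unfolding graph_morphism_def using ch(2) nH P5 lR by auto
  have t1G: "\<tau>1 ` nodes G \<subseteq> HH"
  proof
    fix w assume "w \<in> \<tau>1 ` nodes G"
    then obtain g where g: "g \<in> nodes G" "w = \<tau>1 g" by blast
    show "w \<in> HH"
    proof (cases "g \<in> m ` nodes L")
      case True
      then obtain x where x: "x \<in> nodes L" "g = m x" by blast
      then have "w = \<delta> (\<tau> x)" using P1 g by simp
      moreover have "\<tau> x \<in> nodes R" using tauR x by blast
      ultimately show ?thesis using P5 by blast
    next
      case False then show ?thesis using g P5 by blast
    qed
  qed
  have gon: "graphic_on G H \<tau>1 (nodes G - m ` nodes L)"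
    using sG unfolding strictly_graphic_on_def strictly_graphic_at_def graphic_on_def graphic_at_def
    by blast
  have cone: "het_cone ar L R \<tau> G m H \<tau>1 \<delta>"
    unfolding het_cone_def using wfH nH t1G gm P1 gon by auto
  have univ: "\<exists>h. het_cone_morphism G R H \<tau>1 \<delta> H' \<tau>1' d' h \<and>
           (\<forall>h'. het_cone_morphism G R H \<tau>1 \<delta> H' \<tau>1' d' h' \<longrightarrow> (\<forall>x\<in>nodes H. h' x = h x))"
    if c': "het_cone ar L R \<tau> G m H' \<tau>1' d'" for H' :: "('k, _) tgraph" and \<tau>1' d'
  proof -
    have t1'G: "\<tau>1' ` nodes G \<subseteq> nodes H'" and gm': "graph_morphism R H' d'"
      and P1': "\<forall>n\<in>nodes L. d' (\<tau> n) = \<tau>1' (m n)"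
      and gon': "graphic_on G H' \<tau>1' (nodes G - m ` nodes L)"
      using c' unfolding het_cone_def by auto
    define N where "N = nodes G - m ` nodes L"
    define h where "h w = (if w \<in> \<delta> ` nodes R then d' (inv_into (nodes R) \<delta> w)
        else \<tau>1' (inv_into N \<tau>1 w))" for w
    have hd: "\<forall>r\<in>nodes R. h (\<delta> r) = d' r"
      unfolding h_def using P3 by auto
    have ht: "\<forall>g\<in>nodes G. h (\<tau>1 g) = \<tau>1' g"
    proof
      fix g assume g: "g \<in> nodes G"
      show "h (\<tau>1 g) = \<tau>1' g"
      proof (cases "g \<in> m ` nodes L")
        case True
        then obtain x where x: "x \<in> nodes L" "g = m x" by blast
        then have "\<tau>1 g = \<delta> (\<tau> x)" using P1 by auto
        then show ?thesis using hd tauR x P1' by auto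
      next
        case False
        then have gN: "g \<in> N" using g N_def by auto
        then have "\<tau>1 g \<notin> \<delta> ` nodes R" using P4 N_def by blast
        moreover have "inj_on \<tau>1 N" using P2 N_def by simp
        ultimately show ?thesis unfolding h_def using gN by auto
      qed
    qed
    have gm'd: "d' ` nodes R \<subseteq> nodes H'" "d' ` labeled R \<subseteq> labeled H'"
      "\<forall>n\<in>labeled R. lab H' (d' n) = lab R n \<and> succ H' (d' n) = map d' (succ R n)"
      using gm' unfolding graph_morphism_def by auto
    have key: "h w \<in> labeled H' \<and> lab H' (h w) = lab H w \<and> succ H' (h w) = map h (succ H w)"
      if w: "w \<in> labeled H" for w
    proof -
      from w consider (a) g where "g \<in> labeled G \<inter> N" "w = \<tau>1 g"
        | (b) r where "r \<in> labeled R" "w = \<delta> r" using ch(1) N_def by blast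
      then show ?thesis
      proof cases
        case a
        then have g: "g \<in> nodes G" using lG by auto
        have sg: "set (succ G g) \<subseteq> nodes G" using sucG a by auto
        have e: "map h (map \<tau>1 (succ G g)) = map \<tau>1' (succ G g)"
          using ht sg by (auto simp: subset_iff)
        have ga: "graphic_at G H' \<tau>1' g" using gon' a N_def unfolding graphic_on_def by auto
        have hw: "h w = \<tau>1' g" using ht g a by simp
        have "\<tau>1 g \<in> labeled H \<and> lab H (\<tau>1 g) = lab G g \<and> succ H (\<tau>1 g) = map \<tau>1 (succ G g)"
          using ch(3) a N_def by blast
        then show ?thesis using ga a hw e unfolding graphic_at_def by auto
      next
        case b
        then have g: "r \<in> nodes R" using lR by auto
        have sg: "set (succ R r) \<subseteq> nodes R" using sucR b by auto
        have e: "map h (map \<delta> (succ R r)) = map d' (succ R r)"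
          using hd sg by (auto simp: subset_iff)
        have hw: "h w = d' r" using hd g b by simp
        have "\<delta> r \<in> labeled H \<and> lab H (\<delta> r) = lab R r \<and> succ H (\<delta> r) = map \<delta> (succ R r)"
          using ch(2) b by blast
        then show ?thesis using gm'd b hw e by auto
      qed
    qed
    have hnodes: "h w \<in> nodes H'" if w: "w \<in> nodes H" for w
    proof -
      from w nH P5 have "w \<in> \<tau>1 ` N \<union> \<delta> ` nodes R" using N_def by simp
      then show ?thesis
      proof
        assume "w \<in> \<tau>1 ` N"
        then obtain g where g: "g \<in> N" "w = \<tau>1 g" by blast
        then have "g \<in> nodes G" using N_def by simp
        then show ?thesis using ht t1'G g by auto
      next
        assume "w \<in> \<delta> ` nodes R"
        then obtain g where g: "g \<in> nodes R" "w = \<delta> g" by blast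
        then show ?thesis using hd gm'd g by auto
      qed
    qed
    have hmor: "graph_morphism H H' h"
      unfolding graph_morphism_def using key hnodes by auto
    have "het_cone_morphism G R H \<tau>1 \<delta> H' \<tau>1' d' h"
      unfolding het_cone_morphism_def using hmor hd ht by auto
    moreover have "\<forall>x\<in>nodes H. h' x = h x" if "het_cone_morphism G R H \<tau>1 \<delta> H' \<tau>1' d' h'" for h'
    proof
      fix w assume w: "w \<in> nodes H"
      have hc: "\<forall>x\<in>nodes G. h' (\<tau>1 x) = \<tau>1' x" "\<forall>x\<in>nodes R. h' (\<delta> x) = d' x"
        using that unfolding het_cone_morphism_def by auto
      from w nH P5 have "w \<in> \<tau>1 ` N \<union> \<delta> ` nodes R" using N_def by simp
      then show "h' w = h w"
      proof
        assume "w \<in> \<tau>1 ` N"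
        then obtain g where g: "g \<in> N" "w = \<tau>1 g" by blast
        then have "g \<in> nodes G" using N_def by simp
        then show ?thesis using ht hc g by auto
      next
        assume "w \<in> \<delta> ` nodes R"
        then obtain g where g: "g \<in> nodes R" "w = \<delta> g" by blast
        then show ?thesis using hd hc g by auto
      qed
    qed
    ultimately show ?thesis by blast
  qed
  show ?thesis using gm cone univ unfolding het_pushout_def by blast
qed


lemma cond_exists:
  assumes wfR: "wf_graph ar R" and wfG: "wf_graph ar G"
    and tauR: "\<tau> ` nodes L \<subseteq> nodes R"
    and P1: "\<forall>x\<in>nodes L. \<delta> (\<tau> x) = \<tau>1 (m x)"
    and P2: "inj_on \<tau>1 (nodes G - m ` nodes L)"
    and P3: "inj_on \<delta> (nodes R)"
    and P4: "\<tau>1 ` (nodes G - m ` nodes L) \<inter> \<delta> ` nodes R = {}"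
    and P5: "HH = \<tau>1 ` (nodes G - m ` nodes L) \<union> \<delta> ` nodes R"
  shows "\<exists>H. pushout_graph_cond ar L R G m HH \<tau>1 \<delta> H"
proof -
  define N where "N = nodes G - m ` nodes L"
  define H where "H = \<lparr>nodes = HH, labeled = \<tau>1 ` (labeled G \<inter> N) \<union> \<delta> ` labeled R,
     lab = (\<lambda>w. if w \<in> \<delta> ` nodes R then lab R (inv_into (nodes R) \<delta> w) else lab G (inv_into N \<tau>1 w)),
     succ = (\<lambda>w. if w \<in> \<delta> ` nodes R then map \<delta> (succ R (inv_into (nodes R) \<delta> w))
               else map \<tau>1 (succ G (inv_into N \<tau>1 w)))\<rparr>"
  have lR: "labeled R \<subseteq> nodes R" and lG: "labeled G \<subseteq> nodes G"
    and sucR: "\<forall>n\<in>labeled R. set (succ R n) \<subseteq> nodes R \<and> length (succ R n) = ar (lab R n)"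
    and sucG: "\<forall>n\<in>labeled G. set (succ G n) \<subseteq> nodes G \<and> length (succ G n) = ar (lab G n)"
    using wfR wfG unfolding wf_graph_def by auto
  have i2: "inj_on \<tau>1 N" using P2 N_def by simp
  have t1G: "\<tau>1 ` nodes G \<subseteq> HH"
  proof
    fix w assume "w \<in> \<tau>1 ` nodes G"
    then obtain g where g: "g \<in> nodes G" "w = \<tau>1 g" by blast
    show "w \<in> HH"
    proof (cases "g \<in> m ` nodes L")
      case True
      then obtain x where x: "x \<in> nodes L" "g = m x" by blast
      then have "w = \<delta> (\<tau> x)" using P1 g by simp
      moreover have "\<tau> x \<in> nodes R" using tauR x by blast
      ultimately show ?thesis using P5 by blast
    next
      case False then show ?thesis using g P5 by blast
    qed
  qed
  have Hd: "\<delta> r \<in> labeled H \<and> lab H (\<delta> r) = lab R r \<and> succ H (\<delta> r) = map \<delta> (succ R r)"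
    if "r \<in> labeled R" for r
  proof -
    have "r \<in> nodes R" using that lR by blast
    then have "inv_into (nodes R) \<delta> (\<delta> r) = r" using P3 by simp
    then show ?thesis using that lR unfolding H_def by auto
  qed
  have Hdn: "\<delta> r \<notin> labeled H" if "r \<in> nodes R" "r \<notin> labeled R" for r
  proof
    assume "\<delta> r \<in> labeled H"
    then have "\<delta> r \<in> \<tau>1 ` (labeled G \<inter> N) \<or> \<delta> r \<in> \<delta> ` labeled R" unfolding H_def by simp
    then show False
    proof
      assume "\<delta> r \<in> \<tau>1 ` (labeled G \<inter> N)"
      then show False using P4 that N_def by blast
    next
      assume "\<delta> r \<in> \<delta> ` labeled R"
      then obtain r' where "r' \<in> labeled R" "\<delta> r = \<delta> r'" by blast
      then show False using P3 that lR unfolding inj_on_def by blast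
    qed
  qed
  have nd: "\<tau>1 g \<notin> \<delta> ` nodes R" if "g \<in> N" for g using P4 that N_def by blast
  have Ht: "\<tau>1 g \<in> labeled H \<and> lab H (\<tau>1 g) = lab G g \<and> succ H (\<tau>1 g) = map \<tau>1 (succ G g)"
    if "g \<in> labeled G" "g \<in> N" for g
  proof -
    have "inv_into N \<tau>1 (\<tau>1 g) = g" using i2 that by simp
    then show ?thesis using nd[OF that(2)] that unfolding H_def by auto
  qed
  have Htn: "\<tau>1 g \<notin> labeled H" if "g \<in> N" "g \<notin> labeled G" for g
  proof
    assume "\<tau>1 g \<in> labeled H"
    then have "\<tau>1 g \<in> \<tau>1 ` (labeled G \<inter> N) \<or> \<tau>1 g \<in> \<delta> ` labeled R" unfolding H_def by simp
    then show False
    proof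
      assume "\<tau>1 g \<in> \<tau>1 ` (labeled G \<inter> N)"
      then obtain g' where "g' \<in> labeled G \<inter> N" "\<tau>1 g = \<tau>1 g'" by blast
      then show False using i2 that unfolding inj_on_def by blast
    next
      assume "\<tau>1 g \<in> \<delta> ` labeled R"
      then show False using nd[OF that(1)] lR by blast
    qed
  qed
  have nH: "nodes H = HH" unfolding H_def by simp
  have lH: "labeled H = \<tau>1 ` (labeled G \<inter> N) \<union> \<delta> ` labeled R" unfolding H_def by simp
  have wf: "wf_graph ar H"
    unfolding wf_graph_def
  proof (rule conjI)
    show "labeled H \<subseteq> nodes H" unfolding lH nH using P5 lR lG N_def by auto
  next
    show "\<forall>w\<in>labeled H. set (succ H w) \<subseteq> nodes H \<and> length (succ H w) = ar (lab H w)"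
    proof
    fix w assume w: "w \<in> labeled H"
    then have "w \<in> \<tau>1 ` (labeled G \<inter> N) \<or> w \<in> \<delta> ` labeled R" unfolding lH by simp
    then show "set (succ H w) \<subseteq> nodes H \<and> length (succ H w) = ar (lab H w)"
    proof
      assume "w \<in> \<tau>1 ` (labeled G \<inter> N)"
      then obtain g where g: "g \<in> labeled G" "g \<in> N" "w = \<tau>1 g" by blast
      have "set (map \<tau>1 (succ G g)) \<subseteq> HH" using sucG g t1G by auto
      then show ?thesis using Ht[OF g(1,2)] g sucG nH by auto
    next
      assume "w \<in> \<delta> ` labeled R"
      then obtain g where g: "g \<in> labeled R" "w = \<delta> g" by blast
      have "set (map \<delta> (succ R g)) \<subseteq> HH" using sucR g P5 by auto
      then show ?thesis using Hd[OF g(1)] g sucR nH by auto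
    qed
    qed
  qed
  have "strictly_graphic_on G H \<tau>1 (nodes G - m ` nodes L)"
    unfolding strictly_graphic_on_def strictly_graphic_at_def
    using Ht Htn N_def by blast
  moreover have "strictly_graphic_on R H \<delta> (nodes R)"
    unfolding strictly_graphic_on_def strictly_graphic_at_def
    using Hd Hdn by blast
  ultimately show ?thesis using wf nH unfolding pushout_graph_cond_def by blast
qed


lemma sp_struct:
  fixes L :: "('a, 'l) tgraph" and R :: "('b, 'l) tgraph" and G :: "('g, 'l) tgraph"
    and \<tau> :: "'a \<Rightarrow> 'b" and m :: "'a \<Rightarrow> 'g" and HH :: "'h set"
  assumes sp: "set_pushout TYPE(('g + 'b) set) (nodes L) (nodes R) (nodes G) \<tau> m HH \<tau>1 \<delta>"
    and inj: "inj_on m (nodes L)" and tauR: "\<tau> ` nodes L \<subseteq> nodes R"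
  shows "\<forall>x\<in>nodes L. \<delta> (\<tau> x) = \<tau>1 (m x)"
    and "inj_on \<tau>1 (nodes G - m ` nodes L)"
    and "inj_on \<delta> (nodes R)"
    and "\<tau>1 ` (nodes G - m ` nodes L) \<inter> \<delta> ` nodes R = {}"
    and "HH = \<tau>1 ` (nodes G - m ` nodes L) \<union> \<delta> ` nodes R"
proof -
  have S1: "\<tau>1 ` nodes G \<subseteq> HH" and S2: "\<delta> ` nodes R \<subseteq> HH"
    and P1: "\<forall>x\<in>nodes L. \<delta> (\<tau> x) = \<tau>1 (m x)"
    using sp unfolding set_pushout_def by auto
  have U: "\<forall>(X :: ('g + 'b) set set) f g. f ` nodes G \<subseteq> X \<and> g ` nodes R \<subseteq> X \<and> (\<forall>x\<in>nodes L. g (\<tau> x) = f (m x)) \<longrightarrow>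
        (\<exists>u. u ` HH \<subseteq> X \<and> (\<forall>y\<in>nodes G. u (\<tau>1 y) = f y) \<and> (\<forall>z\<in>nodes R. u (\<delta> z) = g z) \<and>
           (\<forall>u'. u' ` HH \<subseteq> X \<and> (\<forall>y\<in>nodes G. u' (\<tau>1 y) = f y) \<and> (\<forall>z\<in>nodes R. u' (\<delta> z) = g z)
                \<longrightarrow> (\<forall>w\<in>HH. u' w = u w)))"
    using sp unfolding set_pushout_def by blast
  show "\<forall>x\<in>nodes L. \<delta> (\<tau> x) = \<tau>1 (m x)" by (rule P1)
  define fc :: "'g \<Rightarrow> ('g + 'b) set" where
    "fc g = (if g \<in> m ` nodes L then {Inr (\<tau> (inv_into (nodes L) m g))} else {Inl g})" for g
  define gc :: "'b \<Rightarrow> ('g + 'b) set" where "gc r = {Inr r}" for r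
  have comm: "\<forall>x\<in>nodes L. gc (\<tau> x) = fc (m x)"
    unfolding fc_def gc_def using inj by auto
  have E: "\<exists>u. u ` HH \<subseteq> UNIV \<and> (\<forall>y\<in>nodes G. u (\<tau>1 y) = fc y) \<and> (\<forall>z\<in>nodes R. u (\<delta> z) = gc z) \<and>
           (\<forall>u'. u' ` HH \<subseteq> UNIV \<and> (\<forall>y\<in>nodes G. u' (\<tau>1 y) = fc y) \<and> (\<forall>z\<in>nodes R. u' (\<delta> z) = gc z)
                \<longrightarrow> (\<forall>w\<in>HH. u' w = u w))"
    by (rule mp[OF U[THEN spec[where x=UNIV], THEN spec[where x=fc], THEN spec[where x=gc]]]) (simp add: comm)
  then obtain u where uall: "u ` HH \<subseteq> UNIV \<and> (\<forall>y\<in>nodes G. u (\<tau>1 y) = fc y) \<and> (\<forall>z\<in>nodes R. u (\<delta> z) = gc z) \<and>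
           (\<forall>u'. u' ` HH \<subseteq> UNIV \<and> (\<forall>y\<in>nodes G. u' (\<tau>1 y) = fc y) \<and> (\<forall>z\<in>nodes R. u' (\<delta> z) = gc z)
                \<longrightarrow> (\<forall>w\<in>HH. u' w = u w))" by (rule exE)
  have u1: "\<forall>y\<in>nodes G. u (\<tau>1 y) = fc y" using uall by blast
  have u2: "\<forall>z\<in>nodes R. u (\<delta> z) = gc z" using uall by blast
  have fcN: "fc g = {Inl g}" if "g \<in> nodes G - m ` nodes L" for g
    using that unfolding fc_def by auto
  show "inj_on \<tau>1 (nodes G - m ` nodes L)"
  proof (rule inj_onI)
    fix a b assume a: "a \<in> nodes G - m ` nodes L" and b: "b \<in> nodes G - m ` nodes L" and e: "\<tau>1 a = \<tau>1 b"
    have "fc a = fc b" using u1 a b e by (metis DiffD1)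
    then show "a = b" using fcN[OF a] fcN[OF b] by simp
  qed
  show "inj_on \<delta> (nodes R)"
  proof (rule inj_onI)
    fix a b assume a: "a \<in> nodes R" and b: "b \<in> nodes R" and e: "\<delta> a = \<delta> b"
    have "gc a = gc b" using u2 a b e by metis
    then show "a = b" unfolding gc_def by simp
  qed
  show "\<tau>1 ` (nodes G - m ` nodes L) \<inter> \<delta> ` nodes R = {}"
  proof (rule ccontr)
    assume "\<tau>1 ` (nodes G - m ` nodes L) \<inter> \<delta> ` nodes R \<noteq> {}"
    then obtain a r where a: "a \<in> nodes G - m ` nodes L" and r: "r \<in> nodes R" and e: "\<tau>1 a = \<delta> r"
      by blast
    have "fc a = gc r" using u1 u2 a r e by (metis DiffD1)
    then show False using fcN[OF a] unfolding gc_def by simp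
  qed
  show "HH = \<tau>1 ` (nodes G - m ` nodes L) \<union> \<delta> ` nodes R"
  proof
    show "\<tau>1 ` (nodes G - m ` nodes L) \<union> \<delta> ` nodes R \<subseteq> HH" using S1 S2 by blast
  next
    show "HH \<subseteq> \<tau>1 ` (nodes G - m ` nodes L) \<union> \<delta> ` nodes R"
    proof (rule ccontr)
      assume "\<not> ?thesis"
      then obtain w where w: "w \<in> HH" and nw: "w \<notin> \<tau>1 ` (nodes G - m ` nodes L) \<union> \<delta> ` nodes R"
        by blast
      have nw2: "w \<notin> \<tau>1 ` nodes G"
      proof
        assume "w \<in> \<tau>1 ` nodes G"
        then obtain g where g: "g \<in> nodes G" "w = \<tau>1 g" by blast
        show False
        proof (cases "g \<in> m ` nodes L")
          case True
          then obtain x where x: "x \<in> nodes L" "g = m x" by blast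
          have "\<tau> x \<in> nodes R" using tauR x by blast
          then have "w = \<delta> (\<tau> x)" using P1 x g by simp
          then show False using nw \<open>\<tau> x \<in> nodes R\<close> by blast
        next
          case False then show False using g nw by blast
        qed
      qed
      define c :: "('g + 'b) set" where "c = {}"
      have E: "\<exists>u. u ` HH \<subseteq> UNIV \<and> (\<forall>y\<in>nodes G. u (\<tau>1 y) = c) \<and> (\<forall>z\<in>nodes R. u (\<delta> z) = c) \<and>
           (\<forall>u'. u' ` HH \<subseteq> UNIV \<and> (\<forall>y\<in>nodes G. u' (\<tau>1 y) = c) \<and> (\<forall>z\<in>nodes R. u' (\<delta> z) = c)
                \<longrightarrow> (\<forall>w\<in>HH. u' w = u w))"
        by (rule mp[OF U[THEN spec[where x=UNIV], THEN spec[where x="\<lambda>_. c"], THEN spec[where x="\<lambda>_. c"]]]) simp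
      then obtain u0 where u0all: "u0 ` HH \<subseteq> UNIV \<and> (\<forall>y\<in>nodes G. u0 (\<tau>1 y) = c) \<and> (\<forall>z\<in>nodes R. u0 (\<delta> z) = c) \<and>
           (\<forall>u'. u' ` HH \<subseteq> UNIV \<and> (\<forall>y\<in>nodes G. u' (\<tau>1 y) = c) \<and> (\<forall>z\<in>nodes R. u' (\<delta> z) = c)
                \<longrightarrow> (\<forall>w\<in>HH. u' w = u0 w))" by (rule exE)
      have u0: "(\<forall>y\<in>nodes G. u0 (\<tau>1 y) = c) \<and> (\<forall>z\<in>nodes R. u0 (\<delta> z) = c)"
        using u0all by blast
      have un: "\<forall>u'. u' ` HH \<subseteq> UNIV \<and> (\<forall>y\<in>nodes G. u' (\<tau>1 y) = c) \<and> (\<forall>z\<in>nodes R. u' (\<delta> z) = c)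
                \<longrightarrow> (\<forall>w\<in>HH. u' w = u0 w)"
        using u0all by blast
      have "w \<notin> \<delta> ` nodes R" using nw by blast
      then have a1: "(\<forall>y\<in>nodes G. (u0(w := v)) (\<tau>1 y) = c) \<and> (\<forall>z\<in>nodes R. (u0(w := v)) (\<delta> z) = c)" for v
        using u0 nw2 by (metis fun_upd_other image_eqI)
      have "(u0(w := UNIV)) w = u0 w" "(u0(w := {})) w = u0 w"
        using un[rule_format, OF conjI[OF subset_UNIV a1]] w by blast+
      then show False by simp
    qed
  qed
qed


theorem mainTheorem2:
  fixes ar :: "'l \<Rightarrow> nat"
    and L :: "('a, 'l) tgraph" and R :: "('b, 'l) tgraph" and G :: "('g, 'l) tgraph"
    and \<tau> :: "'a \<Rightarrow> 'b" and m :: "'a \<Rightarrow> 'g"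
  assumes "wf_graph ar L" and "wf_graph ar R" and "wf_graph ar G"
    and "\<tau> ` nodes L \<subseteq> nodes R"
    and "graph_morphism L G m"
    and "inj_on m (nodes L)"
  shows "(\<exists>(H :: (('g + 'b) set, 'l) tgraph) \<tau>1 d. het_pushout TYPE('k) ar L R \<tau> G m H \<tau>1 d) \<and>
    (\<forall>(HH :: 'h set) \<tau>1 \<delta>.
       set_pushout TYPE(('g + 'b) set) (nodes L) (nodes R) (nodes G) \<tau> m HH \<tau>1 \<delta> \<longrightarrow>
       (\<exists>H. pushout_graph_cond ar L R G m HH \<tau>1 \<delta> H) \<and>
       (\<forall>H H'. pushout_graph_cond ar L R G m HH \<tau>1 \<delta> H \<and> pushout_graph_cond ar L R G m HH \<tau>1 \<delta> H'
           \<longrightarrow> same_graph H H') \<and>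
       (\<forall>H. pushout_graph_cond ar L R G m HH \<tau>1 \<delta> H \<longrightarrow>
           graph_morphism R H \<delta> \<and> het_pushout TYPE('k) ar L R \<tau> G m H \<tau>1 \<delta>))"
  proof -
  note wfL = assms(1) and wfR = assms(2) and wfG = assms(3) and tauR = assms(4)
    and inj = assms(6)
  define N where "N = nodes G - m ` nodes L"
  define tc :: "'g \<Rightarrow> ('g + 'b) set" where
    "tc g = (if g \<in> m ` nodes L then {Inr (\<tau> (inv_into (nodes L) m g))} else {Inl g})" for g
  define dc :: "'b \<Rightarrow> ('g + 'b) set" where "dc r = {Inr r}" for r
  define HHc where "HHc = tc ` N \<union> dc ` nodes R"
  have tcN: "tc g = {Inl g}" if "g \<in> N" for g using that unfolding tc_def N_def by auto
  have Q1: "\<forall>x\<in>nodes L. dc (\<tau> x) = tc (m x)" unfolding tc_def dc_def using inj by auto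
  have Q2: "inj_on tc (nodes G - m ` nodes L)"
    by (rule inj_onI) (simp add: tcN N_def)
  have Q3: "inj_on dc (nodes R)" by (rule inj_onI) (simp add: dc_def)
  have Q4: "tc ` (nodes G - m ` nodes L) \<inter> dc ` nodes R = {}"
    using tcN N_def dc_def by auto
  have Q5: "HHc = tc ` (nodes G - m ` nodes L) \<union> dc ` nodes R" using HHc_def N_def by simp
  obtain Hc where Hc: "pushout_graph_cond ar L R G m HHc tc dc Hc"
    using cond_exists[OF wfR wfG tauR Q1 Q2 Q3 Q4 Q5] by blast
  have part1: "\<exists>(H :: (('g + 'b) set, 'l) tgraph) \<tau>1 d. het_pushout TYPE('k) ar L R \<tau> G m H \<tau>1 d"
    using cond_pushout[OF wfR wfG tauR Q1 Q2 Q3 Q4 Q5 Hc] by blast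
  have part2: "(\<exists>H. pushout_graph_cond ar L R G m HH \<tau>1 \<delta> H) \<and>
       (\<forall>H H'. pushout_graph_cond ar L R G m HH \<tau>1 \<delta> H \<and> pushout_graph_cond ar L R G m HH \<tau>1 \<delta> H'
           \<longrightarrow> same_graph H H') \<and>
       (\<forall>H. pushout_graph_cond ar L R G m HH \<tau>1 \<delta> H \<longrightarrow>
           graph_morphism R H \<delta> \<and> het_pushout TYPE('k) ar L R \<tau> G m H \<tau>1 \<delta>)"
    if sp: "set_pushout TYPE(('g + 'b) set) (nodes L) (nodes R) (nodes G) \<tau> m HH \<tau>1 \<delta>"
    for HH :: "'h set" and \<tau>1 \<delta>
  proof -
    note P = sp_struct[OF sp inj tauR]
    show ?thesis
      using cond_exists[OF wfR wfG tauR P(1) P(2) P(3) P(4) P(5)]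
        cond_unique[OF wfR wfG P(5)]
        cond_pushout[OF wfR wfG tauR P(1) P(2) P(3) P(4) P(5)]
      by blast
  qed
  show ?thesis using part1 part2 by blast
qed

end
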